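(* Let $\mathcal{H}$ be a complex separable Hilbert space, $A\in\mathcal{B}(\mathcal{H})$ and $\mathcal{G}\subset\mathcal{H}$ countable such that $\{e^{tA}g\}_{g\in\mathcal{G},\,t\in[0,\infty)}$ is a semi-continuous frame for $\mathcal{H}$. If $\{e^{tA}\}_{t\ge0}$ is exponentially stable, then there exists $0<L<\infty$ such that $\{e^{tA}g\}_{g\in\mathcal{G},\,t\in[0,L]}$ is a semi-continuous frame for $\mathcal{H}$.
   Context: For $A\in\mathcal{B}(\mathcal{H})$, $e^{tA}:=\sum_{n\ge0}\frac{t^n}{n!}A^n$. The semigroup $\{e^{tA}\}_{t\ge0}$ is exponentially stable if there are constants $M\ge1$ and $\omega<0$ with $\|e^{tA}\|\le Me^{\omega t}$ for all $t\ge0$. For a countable $\mathcal{G}\subset\mathcal{H}$ and an interval $\mathcal{T}\subset[0,\infty)$, $\{e^{tA}g\}_{g\in\mathcal{G},t\in\mathcal{T}}$ is a semi-continuous frame for $\mathcal{H}$ if there are constants $c,C>0$ such that $c\|f\|^2\le\sum_{g\in\mathcal{G}}\int_{\mathcal{T}}|\langle f,e^{tA}g\rangle|^2\,dt\le C\|f\|^2$ for all $f\in\mathcal{H}$. *)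

theory Defs
  imports "HOL-Analysis.Analysis"
begin

text \<open>HOL-Analysis only provides real inner product spaces, so we introduce complex
  vector spaces, complex inner product spaces and complex Hilbert spaces as type classes.\<close>

class complex_vector = real_vector +
  fixes cscale :: "complex \<Rightarrow> 'a \<Rightarrow> 'a"
  assumes cscale_add_right: "cscale a (x + y) = cscale a x + cscale a y"
    and cscale_add_left: "cscale (a + b) x = cscale a x + cscale b x"
    and cscale_cscale: "cscale a (cscale b x) = cscale (a * b) x"
    and cscale_one: "cscale 1 x = x"
    and scaleR_cscale: "r *\<^sub>R x = cscale (complex_of_real r) x"

class complex_inner = complex_vector + real_normed_vector +
  fixes cinner :: "'a \<Rightarrow> 'a \<Rightarrow> complex"
  assumes cinner_add_left: "cinner (x + y) z = cinner x z + cinner y z"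
    and cinner_cscale_left: "cinner (cscale a x) y = a * cinner x y"
    and cinner_commute: "cinner y x = cnj (cinner x y)"
    and cinner_ge_zero: "0 \<le> Re (cinner x x)"
    and cinner_eq_zero_iff: "cinner x x = 0 \<longleftrightarrow> x = 0"
    and norm_eq_sqrt_cinner: "norm x = sqrt (Re (cinner x x))"

class complex_hilbert = complex_inner + complete_space

definition separable_space :: "'a::topological_space set \<Rightarrow> bool" where
  "separable_space S \<longleftrightarrow> (\<exists>D. countable D \<and> D \<subseteq> S \<and> S \<subseteq> closure D)"

text \<open>Elements of \<open>B(H)\<close>: bounded (real-)linear operators that are in addition complex linear.\<close>

definition complex_linear_op :: "('a::complex_inner \<Rightarrow>\<^sub>L 'a) \<Rightarrow> bool" where
  "complex_linear_op A \<longleftrightarrow> (\<forall>c x. blinfun_apply A (cscale c x) = cscale c (blinfun_apply A x))"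

fun blpow :: "('a::real_normed_vector \<Rightarrow>\<^sub>L 'a) \<Rightarrow> nat \<Rightarrow> ('a \<Rightarrow>\<^sub>L 'a)" where
  "blpow A 0 = id_blinfun"
| "blpow A (Suc n) = A o\<^sub>L blpow A n"

definition op_exp :: "real \<Rightarrow> ('a::real_normed_vector \<Rightarrow>\<^sub>L 'a) \<Rightarrow> ('a \<Rightarrow>\<^sub>L 'a)" where
  "op_exp t A = (\<Sum>n. (t ^ n / fact n) *\<^sub>R blpow A n)"

definition exp_stable :: "('a::real_normed_vector \<Rightarrow>\<^sub>L 'a) \<Rightarrow> bool" where
  "exp_stable A \<longleftrightarrow> (\<exists>M \<omega>::real. M \<ge> 1 \<and> \<omega> < 0 \<and>
      (\<forall>t\<ge>0. norm (op_exp t A) \<le> M * exp (\<omega> * t)))"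

definition frame_sum :: "('a::complex_inner \<Rightarrow>\<^sub>L 'a) \<Rightarrow> 'a set \<Rightarrow> real set \<Rightarrow> 'a \<Rightarrow> ennreal" where
  "frame_sum A G T f =
     (\<integral>\<^sup>+ g. (\<integral>\<^sup>+ t. indicator T t * ennreal ((cmod (cinner f (blinfun_apply (op_exp t A) g)))\<^sup>2) \<partial>lborel)
        \<partial>count_space G)"

definition semi_continuous_frame :: "('a::complex_inner \<Rightarrow>\<^sub>L 'a) \<Rightarrow> 'a set \<Rightarrow> real set \<Rightarrow> bool" where
  "semi_continuous_frame A G T \<longleftrightarrow> (\<exists>c C::real. c > 0 \<and> C > 0 \<and>
     (\<forall>f. ennreal (c * (norm f)\<^sup>2) \<le> frame_sum A G T f \<and> frame_sum A G T f \<le> ennreal (C * (norm f)\<^sup>2)))"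

end

theory Submission
  imports Defs
begin


context complex_inner begin

lemma cinner_zero_left[simp]: "cinner 0 y = 0"
  using cinner_add_left[of 0 0 y] by simp

lemma cinner_minus_left: "cinner (- x) y = - cinner x y"
proof -
  have "cinner x y + cinner (- x) y = 0" using cinner_add_left[of x "-x" y] by simp
  moreover have "cinner (- x) y = - cinner x y + (cinner x y + cinner (- x) y)" by simp
  ultimately show ?thesis by simp
qed

lemma cinner_diff_left: "cinner (x - y) z = cinner x z - cinner y z"
  using cinner_add_left[of x "-y" z] by (simp add: cinner_minus_left)

lemma cinner_add_right: "cinner x (y + z) = cinner x y + cinner x z"
proof -
  have "cinner x (y + z) = cnj (cinner (y + z) x)" by (rule cinner_commute)
  also have "\<dots> = cnj (cinner y x) + cnj (cinner z x)" by (simp only: cinner_add_left complex_cnj_add)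
  also have "\<dots> = cinner x y + cinner x z" by (simp only: cinner_commute[of x y] cinner_commute[of x z])
  finally show ?thesis .
qed

lemma cinner_zero_right[simp]: "cinner x 0 = 0"
proof -
  have "cinner x 0 = cnj (cinner 0 x)" by (rule cinner_commute)
  then show ?thesis by simp
qed

lemma cinner_diff_right: "cinner x (y - z) = cinner x y - cinner x z"
proof -
  have "cinner x (y - z) = cnj (cinner (y - z) x)" by (rule cinner_commute)
  also have "\<dots> = cnj (cinner y x) - cnj (cinner z x)" by (simp only: cinner_diff_left complex_cnj_diff)
  also have "\<dots> = cinner x y - cinner x z" by (simp only: cinner_commute[of x y] cinner_commute[of x z])
  finally show ?thesis .
qed

lemma cinner_cscale_right: "cinner x (cscale a y) = cnj a * cinner x y"
proof -
  have "cinner x (cscale a y) = cnj (cinner (cscale a y) x)" by (rule cinner_commute)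
  also have "\<dots> = cnj a * cnj (cinner y x)" by (simp only: cinner_cscale_left complex_cnj_mult)
  also have "\<dots> = cnj a * cinner x y" by (simp only: cinner_commute[of x y])
  finally show ?thesis .
qed

lemma cinner_scaleR_left: "cinner (r *\<^sub>R x) y = complex_of_real r * cinner x y"
  by (simp add: scaleR_cscale cinner_cscale_left)

lemma cinner_scaleR_right: "cinner x (r *\<^sub>R y) = complex_of_real r * cinner x y"
  by (simp add: scaleR_cscale cinner_cscale_right)

lemma cinner_self: "cinner x x = complex_of_real ((norm x)\<^sup>2)"
proof -
  have "Im (cinner x x) = - Im (cinner x x)"
    using arg_cong[OF cinner_commute[of x x], of Im] by simp
  then have "Im (cinner x x) = 0" by linarith
  moreover have "Re (cinner x x) = (norm x)\<^sup>2"
    using norm_eq_sqrt_cinner[of x] cinner_ge_zero[of x] by simp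
  ultimately show ?thesis by (simp add: complex_eq_iff)
qed

lemma norm_sq_cinner: "(norm x)\<^sup>2 = Re (cinner x x)"
  by (simp add: cinner_self)

lemma norm_add_sq: "(norm (x + y))\<^sup>2 = (norm x)\<^sup>2 + (norm y)\<^sup>2 + 2 * Re (cinner x y)"
proof -
  have "cinner (x+y) (x+y) = cinner x x + cinner y y + (cinner x y + cnj (cinner x y))"
    by (simp add: cinner_add_left cinner_add_right cinner_commute[of y x])
  then show ?thesis by (simp add: norm_sq_cinner)
qed

lemma norm_diff_sq: "(norm (x - y))\<^sup>2 = (norm x)\<^sup>2 + (norm y)\<^sup>2 - 2 * Re (cinner x y)"
proof -
  have "cinner x (-y) = - cinner x y" using cinner_diff_right[of x 0 y] by simp
  then show ?thesis using norm_add_sq[of x "-y"] by simp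
qed

lemma norm_cscale: "norm (cscale a x) = cmod a * norm x"
proof -
  have "cinner (cscale a x) (cscale a x) = (a * cnj a) * cinner x x"
    by (simp add: cinner_cscale_left cinner_cscale_right mult.left_commute)
  then have "(norm (cscale a x))\<^sup>2 = Re ((a * cnj a) * cinner x x)"
    by (simp only: norm_sq_cinner)
  also have "\<dots> = Re (complex_of_real ((cmod a)\<^sup>2) * complex_of_real ((norm x)\<^sup>2))"
    by (simp only: complex_norm_square cinner_self)
  also have "\<dots> = (cmod a * norm x)\<^sup>2"
    by (simp add: power_mult_distrib)
  finally show ?thesis
    by (rule power2_eq_imp_eq) auto
qed

lemma Re_cinner_le: "Re (cinner x y) \<le> norm x * norm y"
proof -
  have "2 * Re (cinner x y) = (norm (x+y))\<^sup>2 - (norm x)\<^sup>2 - (norm y)\<^sup>2"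
    using norm_add_sq[of x y] by simp
  also have "\<dots> \<le> (norm x + norm y)\<^sup>2 - (norm x)\<^sup>2 - (norm y)\<^sup>2"
    using norm_triangle_ineq[of x y] by (simp add: power_mono)
  finally show ?thesis by (simp add: power2_eq_square algebra_simps)
qed

lemma cauchy_schwarz: "cmod (cinner x y) \<le> norm x * norm y"
proof (cases "cinner x y = 0")
  case True then show ?thesis by simp
next
  case False
  define c where "c = cnj (cinner x y) / complex_of_real (cmod (cinner x y))"
  have cm: "cmod c = 1" using False by (simp add: c_def norm_divide)
  have e: "cnj (cinner x y) * cinner x y = complex_of_real ((cmod (cinner x y))\<^sup>2)"
    by (simp only: complex_norm_square mult.commute)
  have "cinner (cscale c x) y = complex_of_real ((cmod (cinner x y))\<^sup>2) / complex_of_real (cmod (cinner x y))"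
    by (simp only: c_def cinner_cscale_left e [symmetric]) (simp add: field_simps)
  also have "\<dots> = complex_of_real (cmod (cinner x y))"
    using False by (simp add: power2_eq_square)
  finally have "cinner (cscale c x) y = complex_of_real (cmod (cinner x y))" .
  then have "cmod (cinner x y) = Re (cinner (cscale c x) y)" by simp
  also have "\<dots> \<le> norm (cscale c x) * norm y" by (rule Re_cinner_le)
  finally show ?thesis by (simp add: norm_cscale cm)
qed

end

lemma bounded_linear_cscale: "bounded_linear (cscale c :: 'a::complex_inner \<Rightarrow> 'a)"
proof (rule bounded_linear_intro[where K="cmod c"])
  show "cscale c (x + y) = cscale c x + cscale c y" for x y :: 'a by (rule cscale_add_right)
  show "cscale c (r *\<^sub>R x) = r *\<^sub>R cscale c x" for r and x :: 'a
    by (simp add: scaleR_cscale cscale_cscale mult.commute)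
  show "norm (cscale c x) \<le> norm x * cmod c" for x :: 'a by (simp add: norm_cscale mult.commute)
qed

lemma bounded_linear_cinner_right: "bounded_linear (cinner (f::'a::complex_inner))"
proof (rule bounded_linear_intro[where K="norm f"])
  show "cinner f (x + y) = cinner f x + cinner f y" for x y by (rule cinner_add_right)
  show "cinner f (r *\<^sub>R x) = r *\<^sub>R cinner f x" for r x
    by (simp add: cinner_scaleR_right scaleR_conv_of_real)
  show "norm (cinner f x) \<le> norm x * norm f" for x using cauchy_schwarz[of f x] by (simp add: mult.commute)
qed


instance complex_hilbert \<subseteq> banach ..




lemma arith1: "(a::real) \<ge> 0 \<Longrightarrow> a + N\<^sup>2 + 2*N*P \<le> N\<^sup>2 * (E + 1 + 2*Q) \<Longrightarrow> 2*N*(P - N*Q) \<le> N\<^sup>2 * E"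
  by (simp add: algebra_simps power2_eq_square)
lemma arith2:
  fixes N r W X :: real
  assumes "N > 0" "X \<ge> 0" "W > 0" "r = 1 / (N * (X + 1))"
    and "2 * N * (r * W) \<le> N\<^sup>2 * (r\<^sup>2 * W) * X"
  shows False
proof -
  have p: "N * (X + 1) > 0" using assms(1,2) by simp
  have Nr: "N * r = 1 / (X + 1)" using assms(1,2,4) p by (simp add: field_simps)
  have "N\<^sup>2 * (r\<^sup>2 * W) * X = (N*r) * (N * r) * W * X" using assms(3) by (simp add: power2_eq_square algebra_simps)
  also have "\<dots> = W * X / (X+1)^2" by (simp add: Nr power2_eq_square)
  finally have a: "2 * N * (r * W) \<le> W * X / (X+1)^2" using assms(5) by simp
  have "2 * N * (r * W) = 2 * W * (N * r)" by (simp add: ac_simps)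
  then have "2 * N * (r * W) = 2 * W / (X+1)" using Nr by simp
  then have "2 * W / (X+1) \<le> W * X / (X+1)^2" using a by simp
  moreover have q: "(X+1)^2 > 0" "X + 1 \<noteq> 0" using assms(2) by auto
  ultimately have "2 * W / (X+1) * (X+1)^2 \<le> W*X/(X+1)^2 * (X+1)^2"
    by (intro mult_right_mono) auto
  then have "2 * W * (X+1) \<le> W * X" using q by (simp add: power2_eq_square)
  moreover have "2 * W * (X+1) = 2 * (W * X) + 2 * W" by (simp add: algebra_simps)
  moreover have "0 \<le> W * X" using assms(2,3) by simp
  ultimately show False using assms(3) by linarith
qed
lemma cmod_add_real_sq: "(cmod (z + complex_of_real r))\<^sup>2 = (cmod z)\<^sup>2 + r\<^sup>2 + 2 * r * Re z"
  by (simp only: cmod_power2) (simp add: power2_eq_square algebra_simps)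

lemma variational:
  fixes \<phi> :: "'a::complex_inner \<Rightarrow> complex"
  assumes add: "\<And>x y. \<phi> (x + y) = \<phi> x + \<phi> y"
    and sc: "\<And>c x. \<phi> (cscale c x) = c * \<phi> x"
    and bnd: "\<And>y. cmod (\<phi> y) \<le> N * norm y"
    and N: "N > 0" and h0: "norm h0 = 1" "\<phi> h0 = complex_of_real N"
  shows "\<phi> x = complex_of_real N * cinner x h0"
proof -
  define w where "w = \<phi> x - complex_of_real N * cinner x h0"
  have key: "2 * N * Re (e * w) \<le> N\<^sup>2 * (cmod e)\<^sup>2 * (norm x)\<^sup>2" for e
  proof -
    have "cmod (\<phi> (cscale e x + h0)) \<le> N * norm (cscale e x + h0)" by (rule bnd)
    then have "(cmod (\<phi> (cscale e x + h0)))\<^sup>2 \<le> (N * norm (cscale e x + h0))\<^sup>2"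
      by (rule power_mono) simp
    also have "\<dots> = N\<^sup>2 * ((cmod e)\<^sup>2 * (norm x)\<^sup>2 + 1 + 2 * Re (e * cinner x h0))"
      by (simp add: power_mult_distrib norm_add_sq norm_cscale h0 cinner_cscale_left)
    also have "(cmod (\<phi> (cscale e x + h0)))\<^sup>2 = (cmod (e * \<phi> x))\<^sup>2 + N\<^sup>2 + 2 * N * Re (e * \<phi> x)"
      by (simp add: add sc h0 cmod_add_real_sq)
    finally have *: "(cmod (e * \<phi> x))\<^sup>2 + N\<^sup>2 + 2 * N * Re (e * \<phi> x)
        \<le> N\<^sup>2 * ((cmod e)\<^sup>2 * (norm x)\<^sup>2 + 1 + 2 * Re (e * cinner x h0))" .
    have eqn: "Re (e * w) = Re (e * \<phi> x) - N * Re (e * cinner x h0)"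
      by (simp add: w_def algebra_simps)
    have "2 * N * (Re (e * \<phi> x) - N * Re (e * cinner x h0)) \<le> N\<^sup>2 * ((cmod e)\<^sup>2 * (norm x)\<^sup>2)"
      by (rule arith1[OF _ *]) simp
    then show ?thesis by (simp only: eqn mult.assoc)
  qed
  show ?thesis
  proof (rule ccontr)
    assume "\<phi> x \<noteq> complex_of_real N * cinner x h0"
    then have wnz: "w \<noteq> 0" by (simp add: w_def)
    define r where "r = 1 / (N * ((norm x)\<^sup>2 + 1))"
    have "N * ((norm x)\<^sup>2 + 1) > 0" using N by (intro mult_pos_pos) (auto intro: add_nonneg_pos)
    then have r: "r > 0" by (simp add: r_def)
    have "2 * N * Re (complex_of_real r * cnj w * w) \<le> N\<^sup>2 * (cmod (complex_of_real r * cnj w))\<^sup>2 * (norm x)\<^sup>2"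
      by (rule key)
    moreover have "complex_of_real r * cnj w * w = complex_of_real (r * (cmod w)\<^sup>2)"
      by (simp only: mult.assoc complex_norm_square mult.commute[of "cnj w"] of_real_mult)
    moreover have "(cmod (complex_of_real r * cnj w))\<^sup>2 = r\<^sup>2 * (cmod w)\<^sup>2"
      using r by (simp add: norm_mult power_mult_distrib)
    ultimately have ineq: "2 * N * (r * (cmod w)\<^sup>2) \<le> N\<^sup>2 * (r\<^sup>2 * (cmod w)\<^sup>2) * (norm x)\<^sup>2"
      by simp
    have pos: "(cmod w)\<^sup>2 > 0" using wnz by simp
    show False by (rule arith2[OF N zero_le_power2 pos r_def ineq])
  qed
qed


lemma arith3:
  fixes t s q :: real
  assumes "t\<^sup>2 \<le> 4 - s\<^sup>2" "s \<ge> 0" "s \<ge> 2 - q"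
  shows "t\<^sup>2 \<le> 4 * q"
proof (cases "2 - q \<le> 0")
  case True
  then show ?thesis using assms(1) by (smt (verit) zero_le_power2)
next
  case False
  then have "(2 - q)\<^sup>2 \<le> s\<^sup>2" using assms(3) by (intro power_mono) auto
  moreover have "(2 - q)\<^sup>2 = 4 - 4 * q + q\<^sup>2" by (simp add: power2_eq_square algebra_simps)
  ultimately show ?thesis using assms(1) by (smt (verit) zero_le_power2)
qed

lemma arith4: "(N::real) > 0 \<Longrightarrow> 2 * N - D \<le> N * s \<Longrightarrow> 2 - D / N \<le> s"
  by (simp add: field_simps)

lemma arith5: "(N::real) > 0 \<Longrightarrow> I < N * E / 8 \<Longrightarrow> 8 * I / N < E"
  by (simp add: field_simps)

lemma riesz:
  fixes \<phi> :: "'a::complex_hilbert \<Rightarrow> complex"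
  assumes add: "\<And>x y. \<phi> (x + y) = \<phi> x + \<phi> y"
    and sc: "\<And>c x. \<phi> (cscale c x) = c * \<phi> x"
    and bnd: "\<And>x. cmod (\<phi> x) \<le> K * norm x"
  shows "\<exists>u. \<forall>x. \<phi> x = cinner x u"
proof (cases "\<forall>x. \<phi> x = 0")
  case True then show ?thesis by (intro exI[of _ 0]) simp
next
  case False
  then obtain x0 where x0: "\<phi> x0 \<noteq> 0" by auto
  have zero: "\<phi> 0 = 0" using add[of 0 0] by simp
  have scR: "\<phi> (r *\<^sub>R x) = of_real r * \<phi> x" for r x by (simp add: scaleR_cscale sc)
  have bl: "bounded_linear \<phi>"
    by (rule bounded_linear_intro[where K=K]) (auto simp: add scR scaleR_conv_of_real bnd mult.commute)
  have "0 < K * norm x0" using bnd[of x0] x0 by (smt (verit) zero_less_norm_iff)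
  then have Kpos: "K > 0" by (simp add: zero_less_mult_iff)
  define S where "S = (\<lambda>x. cmod (\<phi> x)) ` {x. norm x \<le> 1}"
  have Sne: "S \<noteq> {}" unfolding S_def by (auto intro: exI[of _ 0])
  have Sbdd: "bdd_above S"
    unfolding S_def bdd_above_def
  proof (intro exI ballI)
    fix s assume "s \<in> (\<lambda>x. cmod (\<phi> x)) ` {x. norm x \<le> 1}"
    then obtain x where "norm x \<le> 1" "s = cmod (\<phi> x)" by auto
    then show "s \<le> K" using bnd[of x] Kpos by (smt (verit) mult_left_le)
  qed
  define N where "N = Sup S"
  have leN: "cmod (\<phi> x) \<le> N" if "norm x \<le> 1" for x
    unfolding N_def using that Sbdd by (intro cSup_upper) (auto simp: S_def)
  have bndN: "cmod (\<phi> x) \<le> N * norm x" for x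
  proof (cases "x = 0")
    case True then show ?thesis by (simp add: zero)
  next
    case False
    define y where "y = (1 / norm x) *\<^sub>R x"
    have "norm y = 1" using False by (simp add: y_def)
    then have "cmod (\<phi> y) \<le> N" by (intro leN) simp
    moreover have "cmod (\<phi> y) = cmod (\<phi> x) / norm x"
      by (simp add: y_def scR norm_mult norm_divide)
    ultimately show ?thesis using False by (simp add: field_simps)
  qed
  have "0 < N * norm x0" using bndN[of x0] x0 by (smt (verit) zero_less_norm_iff)
  then have Npos: "N > 0" by (simp add: zero_less_mult_iff)
  have rot: "\<exists>h. norm h \<le> norm x \<and> \<phi> h = of_real (cmod (\<phi> x))" for x
  proof (cases "\<phi> x = 0")
    case True then show ?thesis by (intro exI[of _ 0]) (simp add: zero)
  next
    case False
    define c where "c = cnj (\<phi> x) / complex_of_real (cmod (\<phi> x))"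
    have cm: "cmod c = 1" using False by (simp add: c_def norm_divide)
    have e: "cnj (\<phi> x) * \<phi> x = complex_of_real ((cmod (\<phi> x))\<^sup>2)"
      by (simp only: complex_norm_square mult.commute)
    have "\<phi> (cscale c x) = complex_of_real ((cmod (\<phi> x))\<^sup>2) / complex_of_real (cmod (\<phi> x))"
      by (simp only: sc c_def e [symmetric]) (simp add: field_simps)
    also have "\<dots> = complex_of_real (cmod (\<phi> x))"
      using False by (simp add: power2_eq_square)
    finally show ?thesis by (intro exI[of _ "cscale c x"]) (simp add: norm_cscale cm)
  qed
  have approx: "\<exists>h. norm h \<le> 1 \<and> \<phi> h = of_real (cmod (\<phi> h)) \<and> N - e < cmod (\<phi> h)" if "e > 0" for e
  proof -
    have "N - e < Sup S" using that by (simp add: N_def)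
    then obtain s where "s \<in> S" "N - e < s" using less_cSup_iff[OF Sne Sbdd] by blast
    then obtain x where x: "norm x \<le> 1" "N - e < cmod (\<phi> x)" by (auto simp: S_def)
    obtain h where "norm h \<le> norm x" "\<phi> h = of_real (cmod (\<phi> x))" using rot by blast
    then show ?thesis using x by (intro exI[of _ h]) auto
  qed
  have "\<forall>n::nat. \<exists>y. norm y \<le> 1 \<and> \<phi> y = of_real (cmod (\<phi> y)) \<and> N - 1 / real (Suc n) < cmod (\<phi> y)"
    using approx by simp
  then obtain h where h: "\<And>n. norm (h n) \<le> 1" "\<And>n. \<phi> (h n) = of_real (cmod (\<phi> (h n)))"
      "\<And>n. N - 1 / real (Suc n) < cmod (\<phi> (h n))"
    by metis
  have step: "(norm (h m - h n))\<^sup>2 \<le> 4 * ((1 / real (Suc m) + 1 / real (Suc n)) / N)" for m n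
  proof (rule arith3)
    show "(norm (h m - h n))\<^sup>2 \<le> 4 - (norm (h m + h n))\<^sup>2"
    proof -
      have "(norm (h m - h n))\<^sup>2 = 2 * (norm (h m))\<^sup>2 + 2 * (norm (h n))\<^sup>2 - (norm (h m + h n))\<^sup>2"
        using norm_add_sq[of "h m" "h n"] norm_diff_sq[of "h m" "h n"] by simp
      moreover have "(norm (h m))\<^sup>2 \<le> 1" "(norm (h n))\<^sup>2 \<le> 1"
        using h(1) by (auto simp: power_le_one_iff)
      ultimately show ?thesis by simp
    qed
    show "0 \<le> norm (h m + h n)" by simp
    have "cmod (\<phi> (h m)) + cmod (\<phi> (h n)) = Re (\<phi> (h m + h n))"
      using h(2)[of m] h(2)[of n] by (simp add: add) (metis Re_complex_of_real)
    also have "\<dots> \<le> cmod (\<phi> (h m + h n))" by (rule complex_Re_le_cmod)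
    also have "\<dots> \<le> N * norm (h m + h n)" by (rule bndN)
    finally have "2 * N - (1 / real (Suc m) + 1 / real (Suc n)) \<le> N * norm (h m + h n)"
      using h(3)[of m] h(3)[of n] by simp
    then show "2 - (1 / real (Suc m) + 1 / real (Suc n)) / N \<le> norm (h m + h n)"
      by (rule arith4[OF Npos])
  qed
  have cauchy: "Cauchy h"
  proof (rule CauchyI)
    fix e :: real assume e: "0 < e"
    then have "0 < N * e\<^sup>2 / 8" using Npos by simp
    then obtain M where M: "inverse (real (Suc M)) < N * e\<^sup>2 / 8"
      using reals_Archimedean by blast
    show "\<exists>M. \<forall>m\<ge>M. \<forall>n\<ge>M. norm (h m - h n) < e"
    proof (intro exI allI impI)
      fix m n assume mn: "M \<le> m" "M \<le> n"
      have "1 / real (Suc m) \<le> inverse (real (Suc M))" "1 / real (Suc n) \<le> inverse (real (Suc M))"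
        using mn by (auto simp: field_simps)
      then have "4 * ((1 / real (Suc m) + 1 / real (Suc n)) / N) \<le> 8 * inverse (real (Suc M)) / N"
        using Npos by (simp add: divide_right_mono)
      also have "\<dots> < e\<^sup>2" by (rule arith5[OF Npos M])
      finally have "(norm (h m - h n))\<^sup>2 < e\<^sup>2" using step[of m n] by simp
      then show "norm (h m - h n) < e" using e by (simp add: power_less_imp_less_base)
    qed
  qed
  then obtain h0 where lim: "h \<longlonglongrightarrow> h0"
    using Cauchy_convergent convergent_def by blast
  have "norm h0 \<le> 1"
    by (rule LIMSEQ_le_const2[OF tendsto_norm[OF lim]]) (use h(1) in auto)
  have lim1: "(\<lambda>n. \<phi> (h n)) \<longlonglongrightarrow> \<phi> h0" by (rule bounded_linear.tendsto[OF bl lim])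
  have "(\<lambda>n. cmod (\<phi> (h n))) \<longlonglongrightarrow> N"
  proof (rule tendsto_sandwich)
    show "\<forall>\<^sub>F n in sequentially. N - 1 / real (Suc n) \<le> cmod (\<phi> (h n))"
      using h(3) by (intro always_eventually allI less_imp_le) simp
    show "\<forall>\<^sub>F n in sequentially. cmod (\<phi> (h n)) \<le> N"
      using h(1) leN by (intro always_eventually allI) simp
    show "(\<lambda>n. N - 1 / real (Suc n)) \<longlonglongrightarrow> N"
      using tendsto_diff[OF tendsto_const LIMSEQ_inverse_real_of_nat, of N] by (simp add: inverse_eq_divide)
    show "(\<lambda>n. N) \<longlonglongrightarrow> N" by simp
  qed
  then have "(\<lambda>n. complex_of_real (cmod (\<phi> (h n)))) \<longlonglongrightarrow> complex_of_real N"
    by (rule tendsto_of_real)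
  then have "(\<lambda>n. \<phi> (h n)) \<longlonglongrightarrow> complex_of_real N"
    using h(2) by simp
  then have ph0: "\<phi> h0 = complex_of_real N" using lim1 LIMSEQ_unique by blast
  have "N \<le> N * norm h0" using bndN[of h0] ph0 Npos by simp
  then have "norm h0 = 1" using \<open>norm h0 \<le> 1\<close> Npos by (simp add: mult_le_cancel_left1)
  have main: "\<phi> x = complex_of_real N * cinner x h0" for x
    by (rule variational[OF add sc bndN Npos \<open>norm h0 = 1\<close> ph0])
  show ?thesis
    by (intro exI[of _ "cscale (complex_of_real N) h0"]) (simp add: main cinner_cscale_right)
qed



lemma blinfun_compose_assoc': "(a o\<^sub>L b) o\<^sub>L c = a o\<^sub>L (b o\<^sub>L c)"
  by (rule blinfun_eqI) simp

lemma blpow_add: "blpow A i o\<^sub>L blpow A j = blpow A (i + j)"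
  by (induction i) (simp_all add: blinfun_compose_assoc' blinfun_eqI)

lemma norm_blpow: "norm (blpow A n) \<le> norm A ^ n"
proof (induction n)
  case 0 then show ?case using norm_blinfun_id_le by simp
next
  case (Suc n)
  have "norm (blpow A (Suc n)) \<le> norm A * norm (blpow A n)" by (simp add: norm_blinfun_compose)
  also have "\<dots> \<le> norm A * norm A ^ n" using Suc by (simp add: mult_left_mono)
  finally show ?case by simp
qed

lemma summable_norm_op_exp: "summable (\<lambda>n. norm ((t ^ n / fact n) *\<^sub>R blpow A n))"
proof (rule summable_comparison_test')
  show "summable (\<lambda>n. inverse (fact n) * (\<bar>t\<bar> * norm A) ^ n)" by (rule summable_exp)
  fix n :: nat
  have "norm ((t ^ n / fact n) *\<^sub>R blpow A n) = \<bar>t\<bar> ^ n / fact n * norm (blpow A n)"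
    by (simp add: power_abs)
  also have "\<dots> \<le> \<bar>t\<bar> ^ n / fact n * norm A ^ n"
    by (intro mult_left_mono norm_blpow) simp
  also have "\<dots> = inverse (fact n) * (\<bar>t\<bar> * norm A) ^ n"
    by (simp add: power_mult_distrib divide_inverse)
  finally show "norm (norm ((t ^ n / fact n) *\<^sub>R blpow A n)) \<le> inverse (fact n) * (\<bar>t\<bar> * norm A) ^ n"
    by simp
qed

lemma bl_apply: "bounded_linear (\<lambda>T. blinfun_apply T x)"
  by (rule blinfun.bounded_linear_left)

lemma summable_op_exp:
  fixes A :: "'a::banach \<Rightarrow>\<^sub>L 'a"
  shows "summable (\<lambda>n. (t ^ n / fact n) *\<^sub>R blpow A n)"
  by (rule summable_norm_cancel[OF summable_norm_op_exp])

lemma op_exp_apply: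
  fixes A :: "'a::banach \<Rightarrow>\<^sub>L 'a"
  shows "blinfun_apply (op_exp t A) x = (\<Sum>n. (t ^ n / fact n) *\<^sub>R blinfun_apply (blpow A n) x)"
  unfolding op_exp_def
  using bounded_linear.suminf[OF bl_apply[of x] summable_op_exp[of t A]]
  by (simp add: blinfun.scaleR_left)

lemma summable_op_exp_apply:
  fixes A :: "'a::banach \<Rightarrow>\<^sub>L 'a"
  shows "summable (\<lambda>n. (t ^ n / fact n) *\<^sub>R blinfun_apply (blpow A n) x)"
  using bounded_linear.summable[OF bl_apply[of x] summable_op_exp[of t A]]
  by (simp add: blinfun.scaleR_left)

lemma blpow_cscale:
  assumes "complex_linear_op A"
  shows "blinfun_apply (blpow A n) (cscale c x) = cscale c (blinfun_apply (blpow A n) x)"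
  using assms by (induction n) (simp_all add: complex_linear_op_def)

lemma cscale_scaleR: "cscale c (r *\<^sub>R x) = r *\<^sub>R cscale c (x::'a::complex_vector)"
  by (simp add: scaleR_cscale cscale_cscale mult.commute)

lemma op_exp_cscale:
  fixes A :: "'a::complex_hilbert \<Rightarrow>\<^sub>L 'a"
  assumes "complex_linear_op A"
  shows "blinfun_apply (op_exp t A) (cscale c x) = cscale c (blinfun_apply (op_exp t A) x)"
proof -
  have "blinfun_apply (op_exp t A) (cscale c x) = (\<Sum>n. cscale c ((t ^ n / fact n) *\<^sub>R blinfun_apply (blpow A n) x))"
    by (simp add: op_exp_apply blpow_cscale[OF assms] cscale_scaleR)
  also have "\<dots> = cscale c (\<Sum>n. (t ^ n / fact n) *\<^sub>R blinfun_apply (blpow A n) x)"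
    by (rule bounded_linear.suminf[OF bounded_linear_cscale summable_op_exp_apply, symmetric])
  finally show ?thesis by (simp add: op_exp_apply)
qed



lemma sum_product_compose:
  "(sum f A) o\<^sub>L (sum g B) = (\<Sum>i\<in>A. \<Sum>j\<in>B. f i o\<^sub>L g j)"
  by (simp add: bounded_bilinear.sum_left[OF bounded_bilinear_blinfun_compose]
      bounded_bilinear.sum_right[OF bounded_bilinear_blinfun_compose]) (rule sum.swap)

lemma Cauchy_product_sums_compose:
  fixes a b :: "nat \<Rightarrow> 'a::banach \<Rightarrow>\<^sub>L 'a"
  assumes a: "summable (\<lambda>k. norm (a k))"
    and b: "summable (\<lambda>k. norm (b k))"
  shows "(\<lambda>k. \<Sum>i\<le>k. a i o\<^sub>L b (k - i)) sums ((\<Sum>k. a k) o\<^sub>L (\<Sum>k. b k))"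
proof -
  let ?S1 = "\<lambda>n::nat. {..<n} \<times> {..<n}"
  let ?S2 = "\<lambda>n::nat. {(i,j). i + j < n}"
  have S1_mono: "\<And>m n. m \<le> n \<Longrightarrow> ?S1 m \<subseteq> ?S1 n" by auto
  have S2_le_S1: "\<And>n. ?S2 n \<subseteq> ?S1 n" by auto
  have S1_le_S2: "\<And>n. ?S1 (n div 2) \<subseteq> ?S2 n" by auto
  have finite_S1: "\<And>n. finite (?S1 n)" by simp
  with S2_le_S1 have finite_S2: "\<And>n. finite (?S2 n)" by (rule finite_subset)

  let ?g = "\<lambda>(i,j). a i o\<^sub>L b j"
  let ?f = "\<lambda>(i,j). norm (a i) * norm (b j)"
  have f_nonneg: "\<And>x. 0 \<le> ?f x" by auto
  then have norm_sum_f: "\<And>A. norm (sum ?f A) = sum ?f A"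
    unfolding real_norm_def
    by (simp only: abs_of_nonneg sum_nonneg [rule_format])

  have "(\<lambda>n. (\<Sum>k<n. a k) o\<^sub>L (\<Sum>k<n. b k)) \<longlonglongrightarrow> ((\<Sum>k. a k) o\<^sub>L (\<Sum>k. b k))"
    by (intro bounded_bilinear.tendsto[OF bounded_bilinear_blinfun_compose]
        summable_LIMSEQ summable_norm_cancel [OF a] summable_norm_cancel [OF b])
  then have 1: "(\<lambda>n. sum ?g (?S1 n)) \<longlonglongrightarrow> ((\<Sum>k. a k) o\<^sub>L (\<Sum>k. b k))"
    by (simp only: sum_product_compose sum.Sigma [rule_format] finite_lessThan)

  have "(\<lambda>n. (\<Sum>k<n. norm (a k)) * (\<Sum>k<n. norm (b k))) \<longlonglongrightarrow> (\<Sum>k. norm (a k)) * (\<Sum>k. norm (b k))"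
    using a b by (intro tendsto_mult summable_LIMSEQ)
  then have "(\<lambda>n. sum ?f (?S1 n)) \<longlonglongrightarrow> (\<Sum>k. norm (a k)) * (\<Sum>k. norm (b k))"
    by (simp only: sum_product sum.Sigma [rule_format] finite_lessThan)
  then have "convergent (\<lambda>n. sum ?f (?S1 n))"
    by (rule convergentI)
  then have Cauchy: "Cauchy (\<lambda>n. sum ?f (?S1 n))"
    by (rule convergent_Cauchy)
  have "Zfun (\<lambda>n. sum ?f (?S1 n - ?S2 n)) sequentially"
  proof (rule ZfunI, simp only: eventually_sequentially norm_sum_f)
    fix r :: real
    assume r: "0 < r"
    from CauchyD [OF Cauchy r] obtain N
      where "\<forall>m\<ge>N. \<forall>n\<ge>N. norm (sum ?f (?S1 m) - sum ?f (?S1 n)) < r" ..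
    then have "\<And>m n. N \<le> n \<Longrightarrow> n \<le> m \<Longrightarrow> norm (sum ?f (?S1 m - ?S1 n)) < r"
      by (simp only: sum_diff finite_S1 S1_mono)
    then have N: "\<And>m n. N \<le> n \<Longrightarrow> n \<le> m \<Longrightarrow> sum ?f (?S1 m - ?S1 n) < r"
      by (simp only: norm_sum_f)
    show "\<exists>N. \<forall>n\<ge>N. sum ?f (?S1 n - ?S2 n) < r"
    proof (intro exI allI impI)
      fix n
      assume "2 * N \<le> n"
      then have n: "N \<le> n div 2" by simp
      have "sum ?f (?S1 n - ?S2 n) \<le> sum ?f (?S1 n - ?S1 (n div 2))"
        by (intro sum_mono2 finite_Diff finite_S1 f_nonneg Diff_mono subset_refl S1_le_S2)
      also have "\<dots> < r"
        using n div_le_dividend by (rule N)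
      finally show "sum ?f (?S1 n - ?S2 n) < r" .
    qed
  qed
  then have "Zfun (\<lambda>n. sum ?g (?S1 n - ?S2 n)) sequentially"
    apply (rule Zfun_le [rule_format])
    apply (simp only: norm_sum_f)
    apply (rule order_trans [OF norm_sum sum_mono])
    apply (auto simp add: norm_blinfun_compose)
    done
  then have 2: "(\<lambda>n. sum ?g (?S1 n) - sum ?g (?S2 n)) \<longlonglongrightarrow> 0"
    unfolding tendsto_Zfun_iff diff_0_right
    by (simp only: sum_diff finite_S1 S2_le_S1)
  with 1 have "(\<lambda>n. sum ?g (?S2 n)) \<longlonglongrightarrow> ((\<Sum>k. a k) o\<^sub>L (\<Sum>k. b k))"
    by (rule Lim_transform2)
  then show ?thesis
    by (simp only: sums_def sum.triangle_reindex)
qed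



lemma exp_coeff: "(\<Sum>i\<le>k. (s ^ i / fact i) * (t ^ (k - i) / fact (k - i))) = (s + t) ^ k / (fact k :: real)"
proof -
  have "(s + t) ^ k / fact k = (\<Sum>i\<le>k. of_nat (k choose i) * s ^ i * t ^ (k - i)) / fact k"
    by (simp add: binomial_ring)
  also have "\<dots> = (\<Sum>i\<le>k. of_nat (k choose i) * s ^ i * t ^ (k - i) / fact k)"
    by (simp add: sum_divide_distrib)
  also have "\<dots> = (\<Sum>i\<le>k. (s ^ i / fact i) * (t ^ (k - i) / fact (k - i)))"
  proof (rule sum.cong)
    fix i assume "i \<in> {..k}"
    then have "i \<le> k" by simp
    then show "of_nat (k choose i) * s ^ i * t ^ (k - i) / fact k = (s ^ i / fact i) * (t ^ (k - i) / fact (k - i))"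
      by (simp add: binomial_fact)
  qed simp
  finally show ?thesis by simp
qed

lemma op_exp_add:
  fixes A :: "'a::banach \<Rightarrow>\<^sub>L 'a"
  shows "op_exp (s + t) A = op_exp s A o\<^sub>L op_exp t A"
proof -
  have trm: "((s ^ i / fact i) *\<^sub>R blpow A i) o\<^sub>L ((t ^ (k - i) / fact (k - i)) *\<^sub>R blpow A (k - i))
      = ((s ^ i / fact i) * (t ^ (k - i) / fact (k - i))) *\<^sub>R blpow A k" if "i \<le> k" for i k
    using that by (simp add: bounded_bilinear.scaleR_left[OF bounded_bilinear_blinfun_compose]
        bounded_bilinear.scaleR_right[OF bounded_bilinear_blinfun_compose] blpow_add mult.commute)
  have "op_exp s A o\<^sub>L op_exp t A = (\<Sum>k. \<Sum>i\<le>k. ((s ^ i / fact i) *\<^sub>R blpow A i) o\<^sub>L ((t ^ (k - i) / fact (k - i)) *\<^sub>R blpow A (k - i)))"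
    unfolding op_exp_def
    by (rule sums_unique[OF Cauchy_product_sums_compose[OF summable_norm_op_exp summable_norm_op_exp]])
  also have "\<dots> = (\<Sum>k. ((s + t) ^ k / fact k) *\<^sub>R blpow A k)"
  proof (rule suminf_cong)
    fix k
    have "(\<Sum>i\<le>k. ((s ^ i / fact i) *\<^sub>R blpow A i) o\<^sub>L ((t ^ (k - i) / fact (k - i)) *\<^sub>R blpow A (k - i)))
        = (\<Sum>i\<le>k. ((s ^ i / fact i) * (t ^ (k - i) / fact (k - i))) *\<^sub>R blpow A k)"
      by (rule sum.cong) (simp_all add: trm)
    also have "\<dots> = ((s + t) ^ k / fact k) *\<^sub>R blpow A k"
      by (simp only: exp_coeff flip: scaleR_sum_left)
    finally show "(\<Sum>i\<le>k. ((s ^ i / fact i) *\<^sub>R blpow A i) o\<^sub>L ((t ^ (k - i) / fact (k - i)) *\<^sub>R blpow A (k - i)))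
        = ((s + t) ^ k / fact k) *\<^sub>R blpow A k" .
  qed
  finally show ?thesis by (simp add: op_exp_def)
qed



lemma op_exp_measurable:
  fixes A :: "'a::banach \<Rightarrow>\<^sub>L 'a"
  shows "(\<lambda>t. op_exp t A) \<in> borel_measurable borel"
proof (rule borel_measurable_LIMSEQ_metric[where f = "\<lambda>i t. \<Sum>n<i. (t ^ n / fact n) *\<^sub>R blpow A n"])
  show "(\<lambda>t. \<Sum>n<i. (t ^ n / fact n) *\<^sub>R blpow A n) \<in> borel_measurable borel" for i
    by (intro borel_measurable_continuous_onI continuous_intros) auto
  show "(\<lambda>i. \<Sum>n<i. (t ^ n / fact n) *\<^sub>R blpow A n) \<longlonglongrightarrow> op_exp t A" for t
    unfolding op_exp_def by (rule summable_LIMSEQ[OF summable_op_exp])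
qed

lemma continuous_on_cinner_right[continuous_intros]:
  "continuous_on S h \<Longrightarrow> continuous_on S (\<lambda>x. cinner (f::'a::complex_inner) (h x))"
  using bounded_linear.continuous_on[OF bounded_linear_cinner_right] by blast

lemma integrand_measurable:
  fixes A :: "'a::complex_hilbert \<Rightarrow>\<^sub>L 'a"
  shows "(\<lambda>t. ennreal ((cmod (cinner f (blinfun_apply (op_exp t A) g)))\<^sup>2)) \<in> borel_measurable lborel"
proof -
  have c: "(\<lambda>T. (cmod (cinner f (blinfun_apply T g)))\<^sup>2) \<in> borel_measurable borel"
    by (intro borel_measurable_continuous_onI continuous_intros)
  have "(\<lambda>t. (cmod (cinner f (blinfun_apply (op_exp t A) g)))\<^sup>2) \<in> borel_measurable borel"
    using measurable_compose[OF op_exp_measurable c] by simp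
  then show ?thesis by simp
qed

lemma adjoint_exists:
  fixes T :: "'a::complex_hilbert \<Rightarrow>\<^sub>L 'a"
  assumes lin: "\<And>c x. blinfun_apply T (cscale c x) = cscale c (blinfun_apply T x)"
  shows "\<exists>u. norm u \<le> norm T * norm f \<and> (\<forall>x. cinner f (blinfun_apply T x) = cinner u x)"
proof -
  have "\<exists>u. \<forall>x. cinner (blinfun_apply T x) f = cinner x u"
  proof (rule riesz[where K = "norm T * norm f"])
    show "cinner (blinfun_apply T (x + y)) f = cinner (blinfun_apply T x) f + cinner (blinfun_apply T y) f" for x y
      by (simp add: blinfun.add_right cinner_add_left)
    show "cinner (blinfun_apply T (cscale c x)) f = c * cinner (blinfun_apply T x) f" for c x
      by (simp add: lin cinner_cscale_left)
    show "cmod (cinner (blinfun_apply T x) f) \<le> norm T * norm f * norm x" for x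
    proof -
      have "cmod (cinner (blinfun_apply T x) f) \<le> norm (blinfun_apply T x) * norm f" by (rule cauchy_schwarz)
      also have "\<dots> \<le> norm T * norm x * norm f" by (intro mult_right_mono norm_blinfun) simp
      finally show ?thesis by (simp add: ac_simps)
    qed
  qed
  then obtain u where u: "\<And>x. cinner (blinfun_apply T x) f = cinner x u" by blast
  have eq: "cinner f (blinfun_apply T x) = cinner u x" for x
    using cinner_commute[of f "blinfun_apply T x"] cinner_commute[of u x] u[of x] by simp
  have "(norm u)\<^sup>2 = Re (cinner (blinfun_apply T u) f)" by (simp add: u norm_sq_cinner)
  also have "\<dots> \<le> cmod (cinner (blinfun_apply T u) f)" by (rule complex_Re_le_cmod)
  also have "\<dots> \<le> norm (blinfun_apply T u) * norm f" by (rule cauchy_schwarz)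
  also have "\<dots> \<le> norm T * norm u * norm f" by (intro mult_right_mono norm_blinfun) simp
  finally have sq: "norm u * norm u \<le> (norm T * norm f) * norm u" by (simp add: power2_eq_square ac_simps)
  have "norm u \<le> norm T * norm f"
  proof (cases "norm u = 0")
    case True then show ?thesis by simp
  next
    case False then have "norm u > 0" by simp
    with sq show ?thesis by simp
  qed
  with eq show ?thesis by blast
qed



lemma small_lemma:
  fixes C M c \<omega> :: real
  assumes cC: "c > 0" "C > 0" and M: "M \<ge> 1" "\<omega> < 0"
    and L: "L \<ge> ln (2 * C * M\<^sup>2 / c) / (- 2 * \<omega>)"
  shows "C * (M * exp (\<omega> * L))\<^sup>2 \<le> c / 2"
proof -
  have q: "2 * C * M\<^sup>2 / c > 0" using cC M by simp
  have w: "- 2 * \<omega> > 0" using M by simp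
  have "ln (2 * C * M\<^sup>2 / c) = (- 2 * \<omega>) * (ln (2 * C * M\<^sup>2 / c) / (- 2 * \<omega>))"
    using w by simp
  also have "\<dots> \<le> (- 2 * \<omega>) * L" using L w by (intro mult_left_mono) auto
  finally have "exp (ln (2 * C * M\<^sup>2 / c)) \<le> exp ((- 2 * \<omega>) * L)" by simp
  then have a: "2 * C * M\<^sup>2 / c \<le> exp ((- 2 * \<omega>) * L)" using q by simp
  define E where "E = exp (2 * \<omega> * L)"
  have Epos: "E > 0" by (simp add: E_def)
  have "exp ((- 2 * \<omega>) * L) = 1 / E" by (simp add: E_def exp_minus field_simps)
  with a have "2 * C * M\<^sup>2 / c \<le> 1 / E" by simp
  then have "2 * C * M\<^sup>2 * E \<le> c" using Epos cC by (simp add: field_simps)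
  moreover have "(M * exp (\<omega> * L))\<^sup>2 = M\<^sup>2 * E"
    by (simp add: E_def power_mult_distrib exp_double[symmetric] mult.assoc)
  ultimately show ?thesis by simp
qed

theorem mainTheorem3:
  fixes A :: "'a::complex_hilbert \<Rightarrow>\<^sub>L 'a" and G :: "'a set"
  assumes "separable_space (UNIV :: 'a set)"
    and "complex_linear_op A"
    and "countable G"
    and "semi_continuous_frame A G {0..}"
    and "exp_stable A"
  shows "\<exists>L::real. 0 < L \<and> semi_continuous_frame A G {0..L}"
proof -
  from assms(4) obtain c C where cC: "c > 0" "C > 0"
    and fr: "\<And>f. ennreal (c * (norm f)\<^sup>2) \<le> frame_sum A G {0..} f"
      "\<And>f. frame_sum A G {0..} f \<le> ennreal (C * (norm f)\<^sup>2)"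
    unfolding semi_continuous_frame_def by blast
  from assms(5) obtain M \<omega> where M: "M \<ge> 1" "\<omega> < 0"
    and Mb: "\<And>t. t \<ge> 0 \<Longrightarrow> norm (op_exp t A) \<le> M * exp (\<omega> * t)"
    unfolding exp_stable_def by blast
  define L where "L = max 1 (ln (2 * C * M\<^sup>2 / c) / (- 2 * \<omega>))"
  have Lpos: "L > 0" by (simp add: L_def)
  have small: "C * (M * exp (\<omega> * L))\<^sup>2 \<le> c / 2"
    by (rule small_lemma[OF cC M]) (simp add: L_def)
  define T where "T = op_exp L A"
  have Tn: "norm T \<le> M * exp (\<omega> * L)" using Mb Lpos by (simp add: T_def)
  have Tlin: "\<And>c x. blinfun_apply T (cscale c x) = cscale c (blinfun_apply T x)"
    unfolding T_def by (rule op_exp_cscale[OF assms(2)])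
  define F where "F f g t = ennreal ((cmod (cinner f (blinfun_apply (op_exp t A) g)))\<^sup>2)" for f g t
  have Fm[measurable]: "\<And>f g. (\<lambda>t. F f g t) \<in> borel_measurable lborel"
    unfolding F_def by (rule integrand_measurable)
  have Fm'[measurable]: "\<And>f g. (\<lambda>t. F f g t) \<in> borel_measurable borel"
    using Fm by simp
  have fs: "frame_sum A G S f = (\<integral>\<^sup>+ g. (\<integral>\<^sup>+ t. indicator S t * F f g t \<partial>lborel) \<partial>count_space G)" for S f
    by (simp add: frame_sum_def F_def)
  have upper: "frame_sum A G {0..L} f \<le> ennreal (C * (norm f)\<^sup>2)" for f
  proof -
    have "frame_sum A G {0..L} f \<le> frame_sum A G {0..} f"
      unfolding fs
      by (intro nn_integral_mono mult_right_mono) (auto simp: indicator_def)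
    then show ?thesis using fr(2) order_trans by blast
  qed
  have lower: "ennreal (c / 2 * (norm f)\<^sup>2) \<le> frame_sum A G {0..L} f" for f
  proof -
    obtain u where u: "norm u \<le> norm T * norm f" "\<And>x. cinner f (blinfun_apply T x) = cinner u x"
      using adjoint_exists[OF Tlin] by blast
    have shift: "F f g (L + s) = F u g s" for g s
      by (simp add: F_def op_exp_add T_def[symmetric] u(2))
    have split: "(\<integral>\<^sup>+ t. indicator {0..} t * F f g t \<partial>lborel)
        = (\<integral>\<^sup>+ t. indicator {0..L} t * F f g t \<partial>lborel) + (\<integral>\<^sup>+ t. indicator {L<..} t * F f g t \<partial>lborel)" for g
    proof -
      have "(\<lambda>t. indicator {0..} t * F f g t) = (\<lambda>t. indicator {0..L} t * F f g t + indicator {L<..} t * F f g t)"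
        using Lpos by (auto simp: indicator_def fun_eq_iff)
      then show ?thesis by (simp add: nn_integral_add)
    qed
    have tail: "(\<integral>\<^sup>+ t. indicator {L<..} t * F f g t \<partial>lborel) \<le> (\<integral>\<^sup>+ t. indicator {0..} t * F u g t \<partial>lborel)" for g
    proof -
      have "(\<integral>\<^sup>+ t. indicator {L<..} t * F f g t \<partial>lborel)
          = ennreal \<bar>1\<bar> * (\<integral>\<^sup>+ s. indicator {L<..} (L + 1 * s) * F f g (L + 1 * s) \<partial>lborel)"
        by (rule nn_integral_real_affine) simp_all
      also have "\<dots> = (\<integral>\<^sup>+ s. indicator {L<..} (L + s) * F u g s \<partial>lborel)"
        by (simp add: shift)
      also have "\<dots> \<le> (\<integral>\<^sup>+ t. indicator {0..} t * F u g t \<partial>lborel)"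
        by (intro nn_integral_mono mult_right_mono) (auto simp: indicator_def)
      finally show ?thesis .
    qed
    have "frame_sum A G {0..} f
        = (\<integral>\<^sup>+ g. (\<integral>\<^sup>+ t. indicator {0..L} t * F f g t \<partial>lborel) + (\<integral>\<^sup>+ t. indicator {L<..} t * F f g t \<partial>lborel) \<partial>count_space G)"
      unfolding fs by (simp add: split)
    also have "\<dots> = frame_sum A G {0..L} f + (\<integral>\<^sup>+ g. (\<integral>\<^sup>+ t. indicator {L<..} t * F f g t \<partial>lborel) \<partial>count_space G)"
      unfolding fs by (rule nn_integral_add) simp_all
    also have "(\<integral>\<^sup>+ g. (\<integral>\<^sup>+ t. indicator {L<..} t * F f g t \<partial>lborel) \<partial>count_space G) \<le> frame_sum A G {0..} u"
      unfolding fs by (intro nn_integral_mono tail)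
    also have "\<dots> \<le> ennreal (C * (norm u)\<^sup>2)" by (rule fr(2))
    also have "\<dots> \<le> ennreal (c / 2 * (norm f)\<^sup>2)"
    proof (rule ennreal_leI)
      have "norm u \<le> M * exp (\<omega> * L) * norm f"
        using u(1) mult_right_mono[OF Tn norm_ge_zero[of f]] by linarith
      then have "(norm u)\<^sup>2 \<le> (M * exp (\<omega> * L) * norm f)\<^sup>2"
        by (intro power_mono) auto
      then have "C * (norm u)\<^sup>2 \<le> C * (M * exp (\<omega> * L))\<^sup>2 * (norm f)\<^sup>2"
        using cC by (simp add: power_mult_distrib)
      also have "\<dots> \<le> c / 2 * (norm f)\<^sup>2" using small by (intro mult_right_mono) auto
      finally show "C * (norm u)\<^sup>2 \<le> c / 2 * (norm f)\<^sup>2" .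
    qed
    finally have *: "ennreal (c / 2 * (norm f)\<^sup>2) + ennreal (c / 2 * (norm f)\<^sup>2)
        \<le> ennreal (c / 2 * (norm f)\<^sup>2) + frame_sum A G {0..L} f"
      using fr(1)[of f] cC by (simp add: add.commute flip: ennreal_plus)
    then show ?thesis by (simp add: ennreal_add_left_cancel_le)
  qed
  show ?thesis
    unfolding semi_continuous_frame_def
    using Lpos cC lower upper by (intro exI[of _ L] conjI exI[of _ "c / 2"] exI[of _ C]) auto
qed


end
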